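(* Let $K$ be a skew field, $V$ a left (topological) $K$-vector space with basis $v^0,v^1,\ldots$, $V'$ the dual right $K$-vector space with basis $p_0,p_1,\ldots$, with pairing $(\cdot,\cdot)$; let $\mathbf f\in V$, $\mathbf g\in V'$, $y_i^k=(v^k,p_i)$, $f_i=(\mathbf f,p_i)$, $g^k=(v^k,\mathbf g)$, and assume $D=(y_i^k)$ generic. Then for pairwise distinct $i_0,\ldots,i_m$ and pairwise distinct $k_0,\ldots,k_m$: (a) $(\Delta_R^m f)_{i_0\ldots i_m}^{k_0\ldots k_m}=\sum_{j=0}^m f_{i_j}\big(|D_{i_0\ldots i_m}^{k_0\ldots k_m}|_j^m\big)^{-1}$; (b) $(\Delta_L^m g)_{i_0\ldots i_m}^{k_0\ldots k_m}=\sum_{l=0}^m\big(|D_{i_0\ldots i_m}^{k_0\ldots k_m}|_m^l\big)^{-1}g^{k_l}$.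
   Context: The pairing $(\cdot,\cdot):V\times V'\to K$ is biadditive with $(\lambda v,p\mu)=\lambda(v,p)\mu$. $D$ is the infinite matrix with entry $y_i^k$ in row $k$, column $i$. $D_{i_0\ldots i_m}^{k_0\ldots k_m}$ is the $(m+1)\times(m+1)$ matrix whose entry in row $l$ and column $j$ ($0\le l,j\le m$) is $y_{i_j}^{k_l}$. Quasideterminants: for a square matrix $M$ over $K$ with rows and columns indexed by $\{0,\ldots,n\}$, let $M_a^b$ denote its entry in row $b$, column $a$; the $(a,b)$-quasideterminant is $|M|_a^b=M_a^b-r\,(M^{(b,a)})^{-1}c$, where $M^{(b,a)}$ is $M$ with row $b$ and column $a$ deleted, $r$ is row $b$ of $M$ with its column-$a$ entry deleted, and $c$ is column $a$ of $M$ with its row-$b$ entry deleted (for $n=0$, $|M|_0^0=M_0^0$). In the commutative case $|M|_a^b=(-1)^{a+b}\det M/\det M^{(b,a)}$. Difference derivatives: extend $i_0,\ldots,i_m$ and $k_0,\ldots,k_m$ to permutations of $\{0,1,\ldots\}$; for generic $D$ there are unique upper triangular $A=(a_m^j)$ and lower triangular $C=(c_l^m)$ such that $q_m=\sum_{j=0}^m p_{i_j}a_m^j$, $w^m=\sum_{l=0}^m c_l^m v^{k_l}$ satisfy $(w^m,q_{m'})=0$ for $m\ne m'$ and $(w^m,p_{i_m})=(v^{k_m},q_m)=1$ (so $q_m$ is the unique right combination of $p_{i_0},\ldots,p_{i_m}$ with $(v^{k_l},q_m)=\delta_{lm}$ for $l\le m$, and $w^m$ the unique left combination of $v^{k_0},\ldots,v^{k_m}$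 with $(w^m,p_{i_j})=\delta_{jm}$ for $j\le m$). Define $(\Delta_R^m f)_{i_0\ldots i_m}^{k_0\ldots k_m}=\sum_{j} f_{i_j}a_m^j=(\mathbf f,q_m)$ and $(\Delta_L^m g)_{i_0\ldots i_m}^{k_0\ldots k_m}=\sum_l c_l^m g^{k_l}=(w^m,\mathbf g)$. Genericity means all finite square submatrices of $D$ and quasideterminants that need to be inverted are invertible. *)

theory Defs
  imports Main
begin

text \<open>Square matrices of size n over a skew field are represented as functions
  M :: nat => nat => 'a, where M r c is the entry in row r and column c
  (indices 0..n-1; values outside are irrelevant).\<close>

definition mat_mul :: "nat \<Rightarrow> (nat \<Rightarrow> nat \<Rightarrow> 'a::division_ring) \<Rightarrow> (nat \<Rightarrow> nat \<Rightarrow> 'a) \<Rightarrow> nat \<Rightarrow> nat \<Rightarrow> 'a" where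
  "mat_mul n A B = (\<lambda>r c. \<Sum>t<n. A r t * B t c)"

definition is_mat_inverse :: "nat \<Rightarrow> (nat \<Rightarrow> nat \<Rightarrow> 'a::division_ring) \<Rightarrow> (nat \<Rightarrow> nat \<Rightarrow> 'a) \<Rightarrow> bool" where
  "is_mat_inverse n A B \<longleftrightarrow>
     (\<forall>r<n. \<forall>c<n. mat_mul n A B r c = (if r = c then 1 else 0)
                 \<and> mat_mul n B A r c = (if r = c then 1 else 0))"

definition mat_invertible :: "nat \<Rightarrow> (nat \<Rightarrow> nat \<Rightarrow> 'a::division_ring) \<Rightarrow> bool" where
  "mat_invertible n A \<longleftrightarrow> (\<exists>B. is_mat_inverse n A B)"

definition mat_inv :: "nat \<Rightarrow> (nat \<Rightarrow> nat \<Rightarrow> 'a::division_ring) \<Rightarrow> nat \<Rightarrow> nat \<Rightarrow> 'a" where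
  "mat_inv n A = (SOME B. is_mat_inverse n A B)"

definition skip :: "nat \<Rightarrow> nat \<Rightarrow> nat" where
  "skip x i = (if i < x then i else Suc i)"

text \<open>Quasideterminant |M|_a^b of an (n+1)x(n+1) matrix M (indices 0..n):
  M_a^b = M b a (row b, column a);
  |M|_a^b = M_a^b - r (M^(b,a))^-1 c, with r = row b without column a,
  c = column a without row b.\<close>
definition quasidet :: "nat \<Rightarrow> (nat \<Rightarrow> nat \<Rightarrow> 'a::division_ring) \<Rightarrow> nat \<Rightarrow> nat \<Rightarrow> 'a" where
  "quasidet n M a b =
     (let N = (\<lambda>r c. M (skip b r) (skip a c));
          Ni = mat_inv n N
      in M b a - (\<Sum>s<n. \<Sum>t<n. M b (skip a s) * Ni s t * M (skip b t) a))"

text \<open>y k i = y_i^k = (v^k, p_i). Submatrix D_{i_0..i_m}^{k_0..k_m}: row l, column j entry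
  y_{i_j}^{k_l}; indices are given as functions I, Kk on {0..m}.\<close>
definition subD :: "(nat \<Rightarrow> nat \<Rightarrow> 'a) \<Rightarrow> (nat \<Rightarrow> nat) \<Rightarrow> (nat \<Rightarrow> nat) \<Rightarrow> nat \<Rightarrow> nat \<Rightarrow> 'a" where
  "subD y I Kk = (\<lambda>l j. y (Kk l) (I j))"

definition generic :: "(nat \<Rightarrow> nat \<Rightarrow> 'a::division_ring) \<Rightarrow> bool" where
  "generic y \<longleftrightarrow>
     (\<forall>m I Kk. inj_on I {..m} \<longrightarrow> inj_on Kk {..m} \<longrightarrow>
        mat_invertible (Suc m) (subD y I Kk)
        \<and> (\<forall>a\<le>m. \<forall>b\<le>m. quasidet m (subD y I Kk) a b \<noteq> 0))"

text \<open>Coefficients a_m^j (j = 0..m) of q_m = sum_j p_{i_j} a_m^j, determined by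
  (v^{k_l}, q_m) = delta_{lm} for l <= m, i.e. sum_j y_{i_j}^{k_l} a_m^j = delta_{lm}.\<close>
definition coeffA :: "(nat \<Rightarrow> nat \<Rightarrow> 'a::division_ring) \<Rightarrow> (nat \<Rightarrow> nat) \<Rightarrow> (nat \<Rightarrow> nat) \<Rightarrow> nat \<Rightarrow> nat \<Rightarrow> 'a" where
  "coeffA y I Kk m = (THE a. (\<forall>j>m. a j = 0) \<and>
      (\<forall>l\<le>m. (\<Sum>j\<le>m. y (Kk l) (I j) * a j) = (if l = m then 1 else 0)))"

text \<open>Coefficients c_l^m (l = 0..m) of w^m = sum_l c_l^m v^{k_l}, determined by
  (w^m, p_{i_j}) = delta_{jm} for j <= m.\<close>
definition coeffC :: "(nat \<Rightarrow> nat \<Rightarrow> 'a::division_ring) \<Rightarrow> (nat \<Rightarrow> nat) \<Rightarrow> (nat \<Rightarrow> nat) \<Rightarrow> nat \<Rightarrow> nat \<Rightarrow> 'a" where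
  "coeffC y I Kk m = (THE c. (\<forall>l>m. c l = 0) \<and>
      (\<forall>j\<le>m. (\<Sum>l\<le>m. c l * y (Kk l) (I j)) = (if j = m then 1 else 0)))"

text \<open>(Delta_R^m f)_{i_0..i_m}^{k_0..k_m} = sum_j f_{i_j} a_m^j = (f, q_m), with f i = f_i = (f, p_i).\<close>
definition DeltaR :: "(nat \<Rightarrow> nat \<Rightarrow> 'a::division_ring) \<Rightarrow> (nat \<Rightarrow> 'a) \<Rightarrow> (nat \<Rightarrow> nat) \<Rightarrow> (nat \<Rightarrow> nat) \<Rightarrow> nat \<Rightarrow> 'a" where
  "DeltaR y f I Kk m = (\<Sum>j\<le>m. f (I j) * coeffA y I Kk m j)"

text \<open>(Delta_L^m g)_{i_0..i_m}^{k_0..k_m} = sum_l c_l^m g^{k_l} = (w^m, g), with g k = g^k = (v^k, g).\<close>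
definition DeltaL :: "(nat \<Rightarrow> nat \<Rightarrow> 'a::division_ring) \<Rightarrow> (nat \<Rightarrow> 'a) \<Rightarrow> (nat \<Rightarrow> nat) \<Rightarrow> (nat \<Rightarrow> nat) \<Rightarrow> nat \<Rightarrow> 'a" where
  "DeltaL y g I Kk m = (\<Sum>l\<le>m. coeffC y I Kk m l * g (Kk l))"

end

theory Submission
  imports Defs
begin

lemma skip_inj: "inj (skip a)"
  unfolding skip_def inj_def by auto

lemma skip_image: "a \<le> n \<Longrightarrow> skip a ` {..<n} = {..<Suc n} - {a}"
proof (rule set_eqI)
  fix x assume a: "a \<le> n"
  show "x \<in> skip a ` {..<n} \<longleftrightarrow> x \<in> {..<Suc n} - {a}"
  proof
    assume "x \<in> skip a ` {..<n}" then show "x \<in> {..<Suc n} - {a}"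
      using a by (auto simp: skip_def)
  next
    assume x: "x \<in> {..<Suc n} - {a}"
    show "x \<in> skip a ` {..<n}"
    proof (cases "x < a")
      case True
      then have "skip a x = x" by (simp add: skip_def)
      then show ?thesis using True a by (metis image_eqI lessThan_iff order_less_le_trans)
    next
      case False
      then obtain z where z: "x = Suc z" "a \<le> z" using x
        by (metis DiffE insertI1 linorder_neqE_nat not_less_eq_eq Suc_pred' le_simps(3) not_less_zero)
      then have "skip a z = x" by (simp add: skip_def)
      moreover have "z < n" using x z by auto
      ultimately show ?thesis by blast
    qed
  qed
qed

lemma sum_skip:
  assumes "a \<le> n"
  shows "(\<Sum>t<Suc n. h t) = h a + (\<Sum>s<n. h (skip a s))"
proof -
  have "(\<Sum>t<Suc n. h t) = h a + (\<Sum>t\<in>{..<Suc n} - {a}. h t)"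
    by (rule sum.remove) (use assms in auto)
  also have "(\<Sum>t\<in>{..<Suc n} - {a}. h t) = (\<Sum>s<n. h (skip a s))"
    using skip_image[OF assms] sum.reindex[of "skip a" "{..<n}" h] skip_inj
    by (metis inj_on_subset subset_UNIV comp_apply sum.cong)
  finally show ?thesis .
qed

lemma skip_neq: "skip b u \<noteq> b"
  by (simp add: skip_def)

lemma dl: "finite A \<Longrightarrow> v \<in> A \<Longrightarrow> (\<Sum>s\<in>A. (if v = s then 1 else 0) * (x s::'a::division_ring)) = x v"
proof -
  assume "finite A" "v \<in> A"
  have "(\<Sum>s\<in>A. (if v = s then 1 else 0) * x s) = (\<Sum>s\<in>A. if v = s then x s else 0)"
    by (rule sum.cong) auto
  then show ?thesis using \<open>finite A\<close> \<open>v \<in> A\<close> by simp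
qed
lemma dr: "finite A \<Longrightarrow> v \<in> A \<Longrightarrow> (\<Sum>s\<in>A. (x s::'a::division_ring) * (if s = v then 1 else 0)) = x v"
proof -
  assume "finite A" "v \<in> A"
  have "(\<Sum>s\<in>A. x s * (if s = v then 1 else 0)) = (\<Sum>s\<in>A. if s = v then x s else 0)"
    by (rule sum.cong) auto
  then show ?thesis using \<open>finite A\<close> \<open>v \<in> A\<close> by simp
qed

lemma quasi_core:
  fixes M B Ni :: "nat \<Rightarrow> nat \<Rightarrow> 'a::division_ring"
  assumes MB: "\<And>r c. r < Suc n \<Longrightarrow> c < Suc n \<Longrightarrow> mat_mul (Suc n) M B r c = (if r = c then 1 else 0)"
    and NiN: "\<And>r c. r < n \<Longrightarrow> c < n \<Longrightarrow>
        mat_mul n Ni (\<lambda>r c. M (skip b r) (skip a c)) r c = (if r = c then 1 else 0)"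
    and a: "a \<le> n" and b: "b \<le> n"
  shows "(M b a - (\<Sum>s<n. \<Sum>t<n. M b (skip a s) * Ni s t * M (skip b t) a)) * B a b = 1"
proof -
  define x where "x s = B (skip a s) b" for s
  define \<beta> where "\<beta> = B a b"
  define N where "N = (\<lambda>r c. M (skip b r) (skip a c))"
  have rows: "M (skip b u) a * \<beta> + (\<Sum>s<n. N u s * x s) = 0" if u: "u < n" for u
  proof -
    have su: "skip b u < Suc n" using u b by (simp add: skip_def)
    have "mat_mul (Suc n) M B (skip b u) b = 0" using MB[OF su] b skip_neq[of b u] by simp
    then show ?thesis unfolding mat_mul_def using sum_skip[OF a, of "\<lambda>t. M (skip b u) t * B t b"]
      by (simp add: x_def \<beta>_def N_def)
  qed
  have rows': "(\<Sum>s<n. N u s * x s) = - (M (skip b u) a * \<beta>)" if "u < n" for u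
    by (metis rows[OF that] add.commute eq_neg_iff_add_eq_0)
  have xs: "x v = - (\<Sum>u<n. Ni v u * M (skip b u) a) * \<beta>" if v: "v < n" for v
  proof -
    have "x v = (\<Sum>s<n. (if v = s then 1 else 0) * x s)"
      by (rule dl[symmetric]) (use v in auto)
    also have "\<dots> = (\<Sum>s<n. (\<Sum>u<n. Ni v u * N u s) * x s)"
      using NiN[OF v] by (intro sum.cong) (simp_all add: mat_mul_def N_def)
    also have "\<dots> = (\<Sum>u<n. Ni v u * (\<Sum>s<n. N u s * x s))"
      unfolding sum_distrib_left sum_distrib_right mult.assoc by (rule sum.swap)
    also have "\<dots> = (\<Sum>u<n. Ni v u * (- (M (skip b u) a * \<beta>)))"
      using rows' by (intro sum.cong) simp_all
    also have "\<dots> = - (\<Sum>u<n. Ni v u * M (skip b u) a) * \<beta>"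
      by (simp add: sum_distrib_right mult.assoc sum_negf)
    finally show ?thesis .
  qed
  have "mat_mul (Suc n) M B b b = 1" using MB b by simp
  then have row_b: "M b a * \<beta> + (\<Sum>s<n. M b (skip a s) * x s) = 1"
    unfolding mat_mul_def using sum_skip[OF a, of "\<lambda>t. M b t * B t b"]
    by (simp add: x_def \<beta>_def)
  have "(\<Sum>s<n. M b (skip a s) * x s) = (\<Sum>s<n. M b (skip a s) * (- (\<Sum>u<n. Ni s u * M (skip b u) a) * \<beta>))"
    using xs by (intro sum.cong) simp_all
  also have "\<dots> = - (\<Sum>s<n. \<Sum>t<n. M b (skip a s) * Ni s t * M (skip b t) a) * \<beta>"
    by (simp add: sum_distrib_left sum_distrib_right mult.assoc sum_negf)
  finally show ?thesis using row_b by (simp add: \<beta>_def algebra_simps)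
qed

lemma inj_skip:
  assumes inj: "inj_on I {..m}" and a: "a \<le> m" and mn: "m = Suc n"
  shows "inj_on (\<lambda>c. I (skip a c)) {..n}"
proof (rule inj_onI)
  fix c1 c2 assume c: "c1 \<in> {..n}" "c2 \<in> {..n}" and e: "I (skip a c1) = I (skip a c2)"
  have "skip a c1 \<in> {..m}" "skip a c2 \<in> {..m}" using c mn by (simp_all add: skip_def)
  then have "skip a c1 = skip a c2" using inj_onD[OF inj e] by blast
  then show "c1 = c2" using skip_inj by (rule injD[rotated])
qed

lemma inv_entry:
  fixes y :: "nat \<Rightarrow> nat \<Rightarrow> 'a::division_ring"
  assumes gen: "generic y"
    and distI: "inj_on I {..m}"
    and distK: "inj_on Kk {..m}"
    and a: "a \<le> m" and b: "b \<le> m"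
  shows "mat_inv (Suc m) (subD y I Kk) a b = inverse (quasidet m (subD y I Kk) a b)"
proof -
  let ?M = "subD y I Kk"
  have "mat_invertible (Suc m) ?M"
    using gen[unfolded generic_def, rule_format, OF distI distK] by (rule conjunct1)
  then have Binv: "is_mat_inverse (Suc m) ?M (mat_inv (Suc m) ?M)"
    unfolding mat_invertible_def mat_inv_def by (rule someI_ex)
  let ?N = "\<lambda>r c. ?M (skip b r) (skip a c)"
  have NiN: "\<And>r c. r < m \<Longrightarrow> c < m \<Longrightarrow>
        mat_mul m (mat_inv m ?N) ?N r c = (if r = c then 1 else 0)"
  proof (cases m)
    case 0 then show "\<And>r c. r < m \<Longrightarrow> c < m \<Longrightarrow> ?thesis r c" by simp
  next
    case (Suc n)
    have eq: "?N = subD y (\<lambda>c. I (skip a c)) (\<lambda>r. Kk (skip b r))"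
      by (simp add: subD_def)
    have i1: "inj_on (\<lambda>c. I (skip a c)) {..n}"
      by (rule inj_skip[OF distI a Suc])
    have i2: "inj_on (\<lambda>r. Kk (skip b r)) {..n}"
      by (rule inj_skip[OF distK b Suc])
    have "mat_invertible (Suc n) ?N" unfolding eq
      using gen[unfolded generic_def, rule_format, OF i1 i2] by (rule conjunct1)
    then have "is_mat_inverse m ?N (mat_inv m ?N)"
      unfolding mat_invertible_def mat_inv_def Suc by (rule someI_ex)
    then show "\<And>r c. r < m \<Longrightarrow> c < m \<Longrightarrow> ?thesis r c" by (simp add: is_mat_inverse_def)
  qed
  have "quasidet m ?M a b * mat_inv (Suc m) ?M a b = 1"
    unfolding quasidet_def Let_def
    by (rule quasi_core[OF _ NiN a b]) (use Binv in \<open>simp_all add: is_mat_inverse_def\<close>)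
  then show ?thesis by (metis inverse_unique)
qed

theorem theorem4:
  fixes y :: "nat \<Rightarrow> nat \<Rightarrow> 'a::division_ring"
    and f g :: "nat \<Rightarrow> 'a"
    and I Kk :: "nat \<Rightarrow> nat"
    and m :: nat
  assumes gen: "generic y"
    and distI: "inj_on I {..m}"
    and distK: "inj_on Kk {..m}"
  shows "DeltaR y f I Kk m
           = (\<Sum>j\<le>m. f (I j) * inverse (quasidet m (subD y I Kk) j m))
         \<and> DeltaL y g I Kk m
           = (\<Sum>l\<le>m. inverse (quasidet m (subD y I Kk) m l) * g (Kk l))"
proof -
  let ?M = "subD y I Kk"
  define B where "B = mat_inv (Suc m) ?M"
  have "mat_invertible (Suc m) ?M"
    using gen[unfolded generic_def, rule_format, OF distI distK] by (rule conjunct1)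
  then have Binv: "is_mat_inverse (Suc m) ?M B"
    unfolding mat_invertible_def mat_inv_def B_def by (rule someI_ex)
  have MB: "(\<Sum>t\<le>m. ?M r t * B t c) = (if r = c then 1 else 0)" if "r \<le> m" "c \<le> m" for r c
    using Binv that by (simp add: is_mat_inverse_def mat_mul_def lessThan_Suc_atMost[symmetric] less_Suc_eq_le)
  have BM: "(\<Sum>t\<le>m. B r t * ?M t c) = (if r = c then 1 else 0)" if "r \<le> m" "c \<le> m" for r c
    using Binv that by (simp add: is_mat_inverse_def mat_mul_def lessThan_Suc_atMost[symmetric] less_Suc_eq_le)
  have A: "coeffA y I Kk m = (\<lambda>j. if j \<le> m then B j m else 0)"
    unfolding coeffA_def
  proof (rule the_equality)
    show "(\<forall>j>m. (if j \<le> m then B j m else 0) = 0) \<and>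
      (\<forall>l\<le>m. (\<Sum>j\<le>m. y (Kk l) (I j) * (if j \<le> m then B j m else 0)) = (if l = m then 1 else 0))"
      using MB by (simp add: subD_def)
  next
    fix a' assume h: "(\<forall>j>m. a' j = 0) \<and>
      (\<forall>l\<le>m. (\<Sum>j\<le>m. y (Kk l) (I j) * a' j) = (if l = m then 1 else 0))"
    show "a' = (\<lambda>j. if j \<le> m then B j m else 0)"
    proof
      fix j show "a' j = (if j \<le> m then B j m else 0)"
      proof (cases "j \<le> m")
        case True
        have "a' j = (\<Sum>t\<le>m. (if j = t then 1 else 0) * a' t)"
          by (rule dl[symmetric]) (use True in auto)
        also have "\<dots> = (\<Sum>t\<le>m. (\<Sum>l\<le>m. B j l * ?M l t) * a' t)"
          using BM True by (intro sum.cong) simp_all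
        also have "\<dots> = (\<Sum>l\<le>m. B j l * (\<Sum>t\<le>m. ?M l t * a' t))"
          unfolding sum_distrib_left sum_distrib_right mult.assoc by (rule sum.swap)
        also have "\<dots> = (\<Sum>l\<le>m. B j l * (if l = m then 1 else 0))"
          using h by (intro sum.cong) (simp_all add: subD_def)
        also have "\<dots> = B j m" by (rule dr) auto
        finally show ?thesis using True by simp
      qed (use h in auto)
    qed
  qed
  have C: "coeffC y I Kk m = (\<lambda>l. if l \<le> m then B m l else 0)"
    unfolding coeffC_def
  proof (rule the_equality)
    show "(\<forall>l>m. (if l \<le> m then B m l else 0) = 0) \<and>
      (\<forall>j\<le>m. (\<Sum>l\<le>m. (if l \<le> m then B m l else 0) * y (Kk l) (I j)) = (if j = m then 1 else 0))"
      using BM by (simp add: subD_def)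
  next
    fix c' assume h: "(\<forall>l>m. c' l = 0) \<and>
      (\<forall>j\<le>m. (\<Sum>l\<le>m. c' l * y (Kk l) (I j)) = (if j = m then 1 else 0))"
    show "c' = (\<lambda>l. if l \<le> m then B m l else 0)"
    proof
      fix l show "c' l = (if l \<le> m then B m l else 0)"
      proof (cases "l \<le> m")
        case True
        have "c' l = (\<Sum>t\<le>m. c' t * (if t = l then 1 else 0))"
          by (rule dr[symmetric]) (use True in auto)
        also have "\<dots> = (\<Sum>t\<le>m. c' t * (\<Sum>j\<le>m. ?M t j * B j l))"
          using MB True by (intro sum.cong) simp_all
        also have "\<dots> = (\<Sum>j\<le>m. (\<Sum>t\<le>m. c' t * ?M t j) * B j l)"
          unfolding sum_distrib_left sum_distrib_right mult.assoc by (rule sum.swap)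
        also have "\<dots> = (\<Sum>j\<le>m. (if m = j then 1 else 0) * B j l)"
          using h by (intro sum.cong) (simp_all add: subD_def)
        also have "\<dots> = B m l" by (rule dl) auto
        finally show ?thesis using True by simp
      qed (use h in auto)
    qed
  qed
  have "DeltaR y f I Kk m = (\<Sum>j\<le>m. f (I j) * inverse (quasidet m ?M j m))"
    unfolding DeltaR_def A B_def
    by (intro sum.cong) (simp_all add: inv_entry[OF gen distI distK])
  moreover have "DeltaL y g I Kk m = (\<Sum>l\<le>m. inverse (quasidet m ?M m l) * g (Kk l))"
    unfolding DeltaL_def C B_def
    by (intro sum.cong) (simp_all add: inv_entry[OF gen distI distK])
  ultimately show ?thesis by simp
qed

end
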